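(* Let $\Sigma$ be a finite alphabet with at least two symbols, $z\in\{B,A\}$, and $P=\Sigma^{\mathbb{N}}\setminus\mathrm{Ult}$. Then $P$ is a perfect subset of $(\Sigma^{\mathbb{N}},\tau_z)$ (closed, with no isolated points in the subspace topology) and $\mathrm{Ult}$ is countable and open; i.e. $P\cup\mathrm{Ult}$ is the Cantor–Bendixson decomposition of $(\Sigma^{\mathbb{N}},\tau_z)$.
   Context: $\mathrm{Ult}=\{u\cdot v^\omega: u,v\in\Sigma^*, v\neq\emptyset\}$, the ultimately periodic infinite words. A language $L\subseteq\Sigma^{\mathbb{N}}$ is $\omega$-regular if accepted by a Büchi automaton $(\Sigma,Q,Q_i,Q_f,\delta)$ (a run on $\sigma$ is $(q_n)_n$ with $q_0\in Q_i$, $(q_n,\sigma(n),q_{n+1})\in\delta$; accepting iff $q_n\in Q_f$ for infinitely many $n$). $\tau_C$ is the Cantor topology on $\Sigma^{\mathbb{N}}$; $\tau_B$ is generated by the $\omega$-regular languages; $\tau_A$ is generated by the $\tau_C$-closed $\omega$-regular languages. *)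

theory Defs
  imports "HOL-Analysis.Analysis" "HOL-Library.Omega_Words_Fun"
begin

definition Ult :: "'a word set" where
  "Ult = {u \<frown> v\<^sup>\<omega> | u v. v \<noteq> []}"

definition buchi_lang ::
  "nat set \<Rightarrow> nat set \<Rightarrow> nat set \<Rightarrow> (nat \<times> 'a \<times> nat) set \<Rightarrow> 'a word set" where
  "buchi_lang Q Qi Qf \<delta> =
     {\<sigma>. \<exists>r :: nat \<Rightarrow> nat. r 0 \<in> Qi \<and> (\<forall>n. (r n, \<sigma> n, r (Suc n)) \<in> \<delta>)
                \<and> infinite {n. r n \<in> Qf}}"

definition omega_regular :: "'a word set \<Rightarrow> bool" where
  "omega_regular L \<longleftrightarrow>
     (\<exists>Q Qi Qf \<delta>. finite Q \<and> Qi \<subseteq> Q \<and> Qf \<subseteq> Q \<and> \<delta> \<subseteq> Q \<times> UNIV \<times> Q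
        \<and> L = buchi_lang Q Qi Qf \<delta>)"

definition tau_C :: "'a word topology" where
  "tau_C = topology_generated_by {{\<sigma>. \<forall>i<length w. \<sigma> i = w ! i} | w. True}"

definition tau_B :: "'a word topology" where
  "tau_B = topology_generated_by {L. omega_regular L}"

definition tau_A :: "'a word topology" where
  "tau_A = topology_generated_by {L. omega_regular L \<and> closedin tau_C L}"

end

theory Submission
  imports Defs
begin

definition per :: "'a word \<Rightarrow> bool" where
  "per w \<longleftrightarrow> (\<exists>n p. 0 < p \<and> (\<forall>i\<ge>n. w (i+p) = w i))"

lemma per_shift:
  fixes q :: nat and w :: "'a word"
  assumes "\<forall>i\<ge>n. w (i+p) = w i"
  shows "w (n + q*p + r) = w (n + r)"
proof (induction q)
  case 0 then show ?case by simp
next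
  case (Suc q)
  have "w (n + Suc q * p + r) = w ((n + q*p + r) + p)" by (simp add: algebra_simps)
  also have "\<dots> = w (n + q*p + r)" using assms by simp
  finally show ?case using Suc by simp
qed

lemma per_mod:
  fixes w :: "'a word"
  assumes "\<forall>i\<ge>n. w (i+p) = w i" "i \<ge> n"
  shows "w i = w (n + (i - n) mod p)"
proof -
  have "(i-n) div p * p + (i-n) mod p = i - n" by (rule div_mult_mod_eq)
  then have "i = n + ((i-n) div p)*p + (i-n) mod p" using assms(2) by linarith
  then have "w i = w (n + ((i-n) div p)*p + (i-n) mod p)" by (rule arg_cong)
  also have "\<dots> = w (n + (i-n) mod p)" by (rule per_shift[OF assms(1)])
  finally show ?thesis .
qed

lemma Ult_iff: "w \<in> Ult \<longleftrightarrow> per w"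
proof
  assume "w \<in> Ult"
  then obtain u v where w: "w = u \<frown> v\<^sup>\<omega>" and v: "v \<noteq> []" unfolding Ult_def by auto
  have "\<forall>i\<ge>length u. w (i + length v) = w i"
  proof (intro allI impI)
    fix i assume i: "i \<ge> length u"
    obtain j where j: "i = length u + j" using i le_Suc_ex by blast
    have "w (i + length v) = v ! ((j + length v) mod length v)" unfolding w j using v by simp
    also have "\<dots> = v ! (j mod length v)" by simp
    also have "\<dots> = w i" unfolding w j using v by simp
    finally show "w (i + length v) = w i" .
  qed
  then show "per w" unfolding per_def using v by blast
next
  assume "per w"
  then obtain n p where p: "0 < p" and h: "\<forall>i\<ge>n. w (i+p) = w i" unfolding per_def by blast
  define u where "u = prefix n w"
  define v where "v = w [n \<rightarrow> n+p]"
  have lv: "length v = p" "length u = n" unfolding u_def v_def by auto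
  have "w = u \<frown> v\<^sup>\<omega>"
  proof
    fix i
    show "w i = (u \<frown> v\<^sup>\<omega>) i"
    proof (cases "i < n")
      case True then show ?thesis using lv by (simp add: u_def)
    next
      case False
      then have "(u \<frown> v\<^sup>\<omega>) i = v ! ((i-n) mod p)" using lv p by simp
      also have "\<dots> = w (n + (i-n) mod p)" using p unfolding v_def by simp
      also have "\<dots> = w i" using per_mod[OF h, of i] False by simp
      finally show ?thesis by simp
    qed
  qed
  moreover have "v \<noteq> []" using lv p by auto
  ultimately show "w \<in> Ult" unfolding Ult_def by blast
qed


definition pump :: "'a word set \<Rightarrow> bool" where
  "pump L \<longleftrightarrow> (\<exists>K::nat. \<forall>x\<in>L. \<exists>c::nat\<Rightarrow>nat. (\<forall>n. c n < K) \<and>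
     (\<forall>n m. n < m \<and> c n = c m \<longrightarrow> prefix n x \<frown> suffix m x \<in> L))"

lemma pump_UNIV: "pump UNIV"
  unfolding pump_def by (rule exI[of _ 1]) auto

lemma pump_Int:
  assumes "pump A" "pump B" shows "pump (A \<inter> B)"
proof -
  obtain K1 where K1: "\<forall>x\<in>A. \<exists>c::nat\<Rightarrow>nat. (\<forall>n. c n < K1) \<and>
     (\<forall>n m. n < m \<and> c n = c m \<longrightarrow> prefix n x \<frown> suffix m x \<in> A)" using assms(1) unfolding pump_def by blast
  obtain K2 where K2: "\<forall>x\<in>B. \<exists>c::nat\<Rightarrow>nat. (\<forall>n. c n < K2) \<and>
     (\<forall>n m. n < m \<and> c n = c m \<longrightarrow> prefix n x \<frown> suffix m x \<in> B)" using assms(2) unfolding pump_def by blast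
  have "\<forall>x\<in>A \<inter> B. \<exists>c::nat\<Rightarrow>nat. (\<forall>n. c n < K1*K2) \<and>
     (\<forall>n m. n < m \<and> c n = c m \<longrightarrow> prefix n x \<frown> suffix m x \<in> A \<inter> B)"
  proof
    fix x assume x: "x \<in> A \<inter> B"
    obtain c1 where c1: "\<forall>n. c1 n < K1" "\<forall>n m. n < m \<and> c1 n = c1 m \<longrightarrow> prefix n x \<frown> suffix m x \<in> A"
      using K1 x by blast
    obtain c2 where c2: "\<forall>n. c2 n < K2" "\<forall>n m. n < m \<and> c2 n = c2 m \<longrightarrow> prefix n x \<frown> suffix m x \<in> B"
      using K2 x by blast
    define c where "c n = c1 n * K2 + c2 n" for n
    have "\<forall>n. c n < K1*K2"
    proof
      fix n
      have "c n < c1 n * K2 + K2" unfolding c_def using c2(1) by simp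
      also have "\<dots> = Suc (c1 n) * K2" by simp
      also have "\<dots> \<le> K1 * K2" using c1(1) by (intro mult_right_mono) (auto simp: Suc_le_eq)
      finally show "c n < K1*K2" .
    qed
    moreover have "\<forall>n m. n < m \<and> c n = c m \<longrightarrow> prefix n x \<frown> suffix m x \<in> A \<inter> B"
    proof (intro allI impI)
      fix n m assume nm: "n < m \<and> c n = c m"
      have K2: "K2 \<noteq> 0" using c2(1) by (metis not_less_zero)
      have "c n div K2 = c1 n" "c n mod K2 = c2 n" "c m div K2 = c1 m" "c m mod K2 = c2 m"
        unfolding c_def using c2(1) K2 by (auto simp: add.commute[of "c1 _ * K2"])
      then have "c1 n = c1 m" "c2 n = c2 m" using nm by metis+
      then show "prefix n x \<frown> suffix m x \<in> A \<inter> B" using nm c1(2) c2(2) by blast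
    qed
    ultimately show "\<exists>c::nat\<Rightarrow>nat. (\<forall>n. c n < K1*K2) \<and>
     (\<forall>n m. n < m \<and> c n = c m \<longrightarrow> prefix n x \<frown> suffix m x \<in> A \<inter> B)" by blast
  qed
  then show ?thesis unfolding pump_def by blast
qed

lemma splice_nth: "(prefix n x \<frown> suffix m x) i = (if i < n then x i else x (m + (i - n)))"
  by (simp add: conc_def)

lemma pump_buchi:
  assumes "finite Q" "Qi \<subseteq> Q" "\<delta> \<subseteq> Q \<times> UNIV \<times> Q"
  shows "pump (buchi_lang Q Qi Qf \<delta>)"
  unfolding pump_def
proof (intro exI[of _ "Suc (Max Q)"] ballI)
  fix x assume "x \<in> buchi_lang Q Qi Qf \<delta>"
  then obtain r where r0: "r 0 \<in> Qi" and rs: "\<forall>n. (r n, x n, r (Suc n)) \<in> \<delta>"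
     and inf: "infinite {n. r n \<in> Qf}" unfolding buchi_lang_def by blast
  have rQ: "r k \<in> Q" for k
    using r0 rs assms(2,3) by (cases k) auto
  show "\<exists>c::nat\<Rightarrow>nat. (\<forall>n. c n < Suc (Max Q)) \<and>
     (\<forall>n m. n < m \<and> c n = c m \<longrightarrow> prefix n x \<frown> suffix m x \<in> buchi_lang Q Qi Qf \<delta>)"
  proof (intro exI[of _ r] conjI allI impI)
    fix k show "r k < Suc (Max Q)" using rQ[of k] assms(1) by (simp add: le_imp_less_Suc)
  next
    fix n m assume nm: "n < m \<and> r n = r m"
    define y where "y = prefix n x \<frown> suffix m x"
    define r' where "r' i = (if i < n then r i else r (m + (i - n)))" for i
    have "r' 0 \<in> Qi" using r0 nm unfolding r'_def by auto
    moreover have "(r' i, y i, r' (Suc i)) \<in> \<delta>" for i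
    proof -
      consider "Suc i < n" | "Suc i = n" | "i \<ge> n" by linarith
      then show ?thesis
      proof cases
        case 1 then show ?thesis using rs unfolding r'_def y_def splice_nth by auto
      next
        case 2 then show ?thesis using rs[rule_format, of i] nm unfolding r'_def y_def splice_nth by auto
      next
        case 3
        then have "m + (Suc i - n) = Suc (m + (i - n))" by simp
        then show ?thesis using 3 rs[rule_format, of "m + (i - n)"] unfolding r'_def y_def splice_nth by auto
      qed
    qed
    moreover have "infinite {i. r' i \<in> Qf}"
      unfolding infinite_nat_iff_unbounded
    proof
      fix k
      obtain j where j: "j > k + m" "r j \<in> Qf" using inf unfolding infinite_nat_iff_unbounded by blast
      have "r' (j - m + n) = r j" unfolding r'_def using j(1) by auto
      then show "\<exists>i>k. i \<in> {i. r' i \<in> Qf}" using j by (intro exI[of _ "j - m + n"]) auto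
    qed
    ultimately show "prefix n x \<frown> suffix m x \<in> buchi_lang Q Qi Qf \<delta>"
      unfolding buchi_lang_def y_def[symmetric] by blast
  qed
qed

lemma omega_regular_pump: "omega_regular L \<Longrightarrow> pump L"
  unfolding omega_regular_def using pump_buchi by blast

lemma splice_not_Ult:
  fixes x :: "'a word"
  assumes "x \<notin> Ult" "n < m"
  shows "prefix n x \<frown> suffix m x \<noteq> x \<and> prefix n x \<frown> suffix m x \<notin> Ult"
proof
  show "prefix n x \<frown> suffix m x \<noteq> x"
  proof
    assume e: "prefix n x \<frown> suffix m x = x"
    have "\<forall>i\<ge>n. x (i + (m - n)) = x i"
    proof (intro allI impI)
      fix i assume "i \<ge> n"
      then have "x i = x (m + (i - n))" using fun_cong[OF e, of i] by (simp add: splice_nth)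
      moreover have "m + (i - n) = i + (m - n)" using \<open>i \<ge> n\<close> assms(2) by simp
      ultimately show "x (i + (m - n)) = x i" by simp
    qed
    then have "per x" unfolding per_def using assms(2) by (intro exI[of _ n] exI[of _ "m-n"]) auto
    then show False using assms(1) Ult_iff by blast
  qed
next
  show "prefix n x \<frown> suffix m x \<notin> Ult"
  proof
    define y where "y = prefix n x \<frown> suffix m x"
    assume "prefix n x \<frown> suffix m x \<in> Ult"
    then obtain N p where p: "0 < p" "\<forall>i\<ge>N. y (i+p) = y i" unfolding y_def[symmetric] Ult_iff per_def by blast
    have yx: "y i = x (i + (m - n))" if "i \<ge> n" for i
    proof -
      have "m + (i - n) = i + (m - n)" using that assms(2) by simp
      then show ?thesis using that unfolding y_def splice_nth by simp
    qed
    have "\<forall>i\<ge>max N n + (m - n). x (i + p) = x i"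
    proof (intro allI impI)
      fix i assume i: "i \<ge> max N n + (m - n)"
      define j where "j = i - (m - n)"
      have ij: "i = j + (m - n)" "j \<ge> N" "j \<ge> n" using i unfolding j_def by auto
      have "x (i + p) = y (j + p)" using yx[of "j + p"] ij by (simp add: algebra_simps)
      also have "\<dots> = y j" using p ij by simp
      also have "\<dots> = x i" using yx[of j] ij by simp
      finally show "x (i + p) = x i" .
    qed
    then have "per x" unfolding per_def using p by blast
    then show False using assms(1) Ult_iff by blast
  qed
qed

lemma pigeon:
  fixes c :: "nat \<Rightarrow> nat"
  assumes "\<forall>n. c n < K"
  shows "\<exists>n m. n < m \<and> c n = c m"
proof (rule ccontr)
  assume "\<not> ?thesis"
  then have "inj_on c {..K}" unfolding inj_on_def by (metis linorder_neqE_nat)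
  then have "card (c ` {..K}) = Suc K" by (simp add: card_image)
  moreover have "c ` {..K} \<subseteq> {..<K}" using assms by auto
  then have "card (c ` {..K}) \<le> K" using card_mono[of "{..<K}"] by fastforce
  ultimately show False by simp
qed

lemma gen_pump:
  assumes "\<forall>s\<in>S. pump s" "generate_topology_on S U"
  shows "\<forall>x\<in>U. \<exists>B. pump B \<and> x \<in> B \<and> B \<subseteq> U"
  using assms(2)
proof (induction rule: generate_topology_on.induct)
  case Empty then show ?case by simp
next
  case (Int a b)
  show ?case
  proof
    fix x assume "x \<in> a \<inter> b"
    then obtain B1 B2 where "pump B1" "x \<in> B1" "B1 \<subseteq> a" "pump B2" "x \<in> B2" "B2 \<subseteq> b"
      using Int.IH by blast
    then show "\<exists>B. pump B \<and> x \<in> B \<and> B \<subseteq> a \<inter> b"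
      by (intro exI[of _ "B1 \<inter> B2"]) (auto intro: pump_Int)
  qed
next
  case (UN K) then show ?case by blast
next
  case (Basis s) then show ?case using assms(1) by blast
qed


lemma singleton_regular:
  fixes w :: "'a word"
  assumes "w \<in> Ult"
  shows "omega_regular {w}"
proof -
  obtain n p where p: "0 < p" and h: "\<forall>i\<ge>n. w (i+p) = w i" using assms Ult_iff per_def by blast
  define N where "N = n + p"
  define s where "s i = (if Suc i < N then Suc i else n)" for i
  define Q where "Q = {..<N}"
  define \<delta> where "\<delta> = {(i, w i, s i) | i. i < N}"
  define r where "r k = (if k < n then k else n + (k - n) mod p)" for k
  have rN: "r k < N" for k unfolding r_def N_def using p by auto
  have sN: "s i < N" for i unfolding s_def N_def using p by auto
  have rw: "w (r k) = w k" for k unfolding r_def using per_mod[OF h, of k] by auto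
  have rs: "r (Suc k) = s (r k)" for k
  proof -
    consider "Suc k < n" | "Suc k = n" | "k \<ge> n" by linarith
    then show ?thesis
    proof cases
      case 1 then show ?thesis unfolding r_def s_def N_def by auto
    next
      case 2 then show ?thesis unfolding r_def s_def N_def using p by auto
    next
      case 3
      then have e: "Suc k - n = Suc (k - n)" by simp
      have "(k - n) mod p < p" using p by simp
      then show ?thesis using 3 unfolding r_def s_def N_def e mod_Suc by auto
    qed
  qed
  have "buchi_lang Q {0} Q \<delta> = {w}"
  proof
    show "{w} \<subseteq> buchi_lang Q {0} Q \<delta>"
    proof -
      have "r 0 \<in> {0}" unfolding r_def using p by auto
      moreover have "(r k, w k, r (Suc k)) \<in> \<delta>" for k
        unfolding \<delta>_def using rN[of k] rs[of k] rw[of k] by auto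
      moreover have "{k. r k \<in> Q} = UNIV" unfolding Q_def using rN by auto
      ultimately have "w \<in> buchi_lang Q {0} Q \<delta>" unfolding buchi_lang_def by auto
      then show ?thesis by simp
    qed
  next
    show "buchi_lang Q {0} Q \<delta> \<subseteq> {w}"
    proof
      fix \<sigma> assume "\<sigma> \<in> buchi_lang Q {0} Q \<delta>"
      then obtain r' where r0: "r' 0 \<in> {0}" and tr: "\<forall>k. (r' k, \<sigma> k, r' (Suc k)) \<in> \<delta>"
        unfolding buchi_lang_def by blast
      have st: "r' (Suc k) = s (r' k) \<and> \<sigma> k = w (r' k)" for k
        using tr[rule_format, of k] unfolding \<delta>_def by auto
      have "r' k = r k" for k
      proof (induction k)
        case 0 then show ?case using r0 p unfolding r_def by auto
      next
        case (Suc k) then show ?case using st[of k] rs[of k] by simp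
      qed
      then have "\<sigma> k = w k" for k using st[of k] rw[of k] by simp
      then show "\<sigma> \<in> {w}" by auto
    qed
  qed
  moreover have "finite Q" "{0} \<subseteq> Q" "Q \<subseteq> Q" "\<delta> \<subseteq> Q \<times> UNIV \<times> Q"
    unfolding Q_def \<delta>_def using p sN by (auto simp: N_def)
  ultimately show ?thesis unfolding omega_regular_def by metis
qed

lemma UNIV_regular: "omega_regular (UNIV :: 'a word set)"
proof -
  have "buchi_lang {0} {0} {0} ({0} \<times> UNIV \<times> {0}) = (UNIV :: 'a word set)"
    unfolding buchi_lang_def by (auto intro!: exI[of _ "\<lambda>_. 0"])
  then show ?thesis unfolding omega_regular_def by (metis finite.intros order_refl)
qed

lemma topspace_tau_C: "topspace (tau_C :: 'a word topology) = UNIV"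
proof -
  have "(UNIV :: 'a word set) \<in> {{\<sigma>. \<forall>i<length w. \<sigma> i = w ! i} | w :: 'a list. True}"
    by (auto intro!: exI[of _ "[]"])
  then show ?thesis unfolding tau_C_def topology_generated_by_topspace by blast
qed

lemma closed_singleton_C: "closedin tau_C {w :: 'a word}"
proof -
  let ?S = "{{\<sigma>. \<forall>i<length w. \<sigma> i = w ! i} | w :: 'a list. True}"
  let ?K = "{{\<tau>. \<forall>j<length (prefix (Suc i) \<sigma>). \<tau> j = prefix (Suc i) \<sigma> ! j} | \<sigma> i. \<sigma> i \<noteq> w i}"
  have "UNIV - {w} = \<Union>?K"
  proof
    show "UNIV - {w} \<subseteq> \<Union>?K"
    proof
      fix \<sigma> assume "\<sigma> \<in> UNIV - {w}"
      then obtain i where "\<sigma> i \<noteq> w i" by auto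
      then show "\<sigma> \<in> \<Union>?K" by (auto simp del: subseq_to_Suc)
    qed
    show "\<Union>?K \<subseteq> UNIV - {w}"
    proof
      fix \<tau> assume "\<tau> \<in> \<Union>?K"
      then obtain \<sigma> i where "\<sigma> i \<noteq> w i" "\<forall>j<length (prefix (Suc i) \<sigma>). \<tau> j = prefix (Suc i) \<sigma> ! j"
        by blast
      then have "\<tau> i \<noteq> w i" by (auto simp del: subseq_to_Suc)
      then show "\<tau> \<in> UNIV - {w}" by auto
    qed
  qed
  moreover have "?K \<subseteq> ?S" by blast
  then have "generate_topology_on ?S (\<Union>?K)"
    by (intro generate_topology_on.UN generate_topology_on.Basis) blast
  ultimately have "openin tau_C (UNIV - {w})"
    unfolding tau_C_def openin_topology_generated_by_iff by simp
  then show ?thesis unfolding closedin_def topspace_tau_C by simp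
qed

lemma closed_UNIV_C: "closedin tau_C (UNIV :: 'a word set)"
  using closedin_topspace[of tau_C] topspace_tau_C by metis


lemma main_general:
  fixes S :: "('a::countable) word set set"
  assumes pS: "\<forall>s\<in>S. pump s" and US: "UNIV \<in> S" and sS: "\<forall>w\<in>Ult. {w} \<in> S"
    and tau: "\<tau> = topology_generated_by S"
  defines "P \<equiv> UNIV - Ult"
  shows "closedin \<tau> P
         \<and> (\<forall>x\<in>P. \<not> openin (subtopology \<tau> P) {x})
         \<and> countable (Ult :: 'a word set)
         \<and> openin \<tau> Ult"
proof -
  have top: "topspace \<tau> = UNIV" unfolding tau using US by auto
  have eq: "Ult = \<Union>{{w} | w. w \<in> Ult}" by blast
  have "generate_topology_on S (\<Union>{{w} | w. w \<in> Ult})"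
    using sS by (intro generate_topology_on.UN generate_topology_on.Basis) blast
  then have "generate_topology_on S Ult" by (subst eq)
  then have oU: "openin \<tau> Ult" unfolding tau openin_topology_generated_by_iff .
  have cP: "closedin \<tau> P" unfolding closedin_def top P_def using oU by (simp add: Diff_Diff_Int)
  have "Ult \<subseteq> (\<lambda>(u, v). u \<frown> v\<^sup>\<omega>) ` (UNIV :: ('a list \<times> 'a list) set)"
    unfolding Ult_def by auto
  then have cU: "countable (Ult :: 'a word set)"
    by (rule countable_subset) (intro countable_image countableI_type)
  have iso: "\<not> openin (subtopology \<tau> P) {x}" if xP: "x \<in> P" for x
  proof
    assume "openin (subtopology \<tau> P) {x}"
    then obtain T where T: "openin \<tau> T" "{x} = T \<inter> P" unfolding openin_subtopology by blast
    then have "generate_topology_on S T" unfolding tau openin_topology_generated_by_iff by simp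
    with pS have "\<forall>x\<in>T. \<exists>B. pump B \<and> x \<in> B \<and> B \<subseteq> T" by (rule gen_pump)
    moreover have "x \<in> T" using T by auto
    ultimately obtain B where B: "pump B" "x \<in> B" "B \<subseteq> T" by blast
    then obtain K :: nat and c :: "nat \<Rightarrow> nat" where c: "\<forall>n. c n < K" "\<forall>n m. n < m \<and> c n = c m \<longrightarrow> prefix n x \<frown> suffix m x \<in> B"
      unfolding pump_def by blast
    obtain n m where nm: "n < m" "c n = c m" using pigeon[OF c(1)] by blast
    have "x \<notin> Ult" using xP unfolding P_def by simp
    then have y: "prefix n x \<frown> suffix m x \<noteq> x" "prefix n x \<frown> suffix m x \<notin> Ult"
      using splice_not_Ult nm(1) by blast+
    have "prefix n x \<frown> suffix m x \<in> B" using c(2) nm by blast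
    then have "prefix n x \<frown> suffix m x \<in> T \<inter> P" using B(3) y(2) unfolding P_def by blast
    then show False using T(2) y(1) by blast
  qed
  show ?thesis using cP iso cU oU by blast
qed

theorem mainTheorem15:
  fixes \<tau> :: "('a::finite) word topology"
  assumes "CARD('a) \<ge> 2"
    and "\<tau> \<in> {tau_B, tau_A}"
  defines "P \<equiv> UNIV - Ult"
  shows "closedin \<tau> P
         \<and> (\<forall>x\<in>P. \<not> openin (subtopology \<tau> P) {x})
         \<and> countable (Ult :: 'a word set)
         \<and> openin \<tau> Ult"
proof (cases "\<tau> = tau_B")
  case True
  show ?thesis unfolding P_def
  proof (rule main_general[of "{L. omega_regular L}"])
    show "\<forall>s\<in>{L. omega_regular L}. pump s" using omega_regular_pump by blast
    show "UNIV \<in> {L. omega_regular L}" using UNIV_regular by simp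
    show "\<forall>w\<in>Ult. {w} \<in> {L. omega_regular L}" using singleton_regular by blast
    show "\<tau> = topology_generated_by {L. omega_regular L}" using True unfolding tau_B_def by simp
  qed
next
  case False
  then have t: "\<tau> = tau_A" using assms(2) by auto
  show ?thesis unfolding P_def
  proof (rule main_general[of "{L. omega_regular L \<and> closedin tau_C L}"])
    show "\<forall>s\<in>{L. omega_regular L \<and> closedin tau_C L}. pump s" using omega_regular_pump by blast
    show "UNIV \<in> {L. omega_regular L \<and> closedin tau_C L}" using UNIV_regular closed_UNIV_C by simp
    show "\<forall>w\<in>Ult. {w} \<in> {L. omega_regular L \<and> closedin tau_C L}"
      using singleton_regular closed_singleton_C by blast
    show "\<tau> = topology_generated_by {L. omega_regular L \<and> closedin tau_C L}" using t unfolding tau_A_def by simp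
  qed
qed

end
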